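(* Let $\lambda_h>0$ and suppose $\Psi(s,y)=G(s)H(y)$ has product form with $\int_0^\infty y\,dG(y)<\infty$. Then for every $x>1$, $$E\,W_{\lambda_h}(1;x)-x+1\le\lambda_h\int_0^\infty y\,dG(y)\,[1-H(x-1)].$$
   Context: The $M/G/1+H$ queue with rate $\lambda_h$ and initial workload $x$ is defined as follows. - It is a single-server FCFS queue with infinite waiting room. - There is one initial customer with remaining service $x$. - Arrivals form a Poisson process of rate $\lambda_h$. - Customers have iid service times with cdf $G$ and iid patience times with cdf $H$ (on $(0,\infty]$), all mutually independent and independent of the arrivals. - A customer arriving at $T$ with patience $Y$ joins if and only if $Y\ge W(T-)$, where $W$ is the workload (decreasing at unit rate while positive), and then adds his service time. $W_{\lambda_h}(t;x)$ is the workload at time $t$. *)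

theory Defs
  imports "HOL-Probability.Probability"
begin

text \<open>Deterministic construction of the workload of the M/G/1+H queue from
  interarrival times A (arrival k happens at time A 0 + ... + A k),
  service times S and patience times Y of the arriving customers.\<close>

text \<open>Workload just after the first n arrival epochs (n = 0: initial workload x).
  Arrival n sees workload p = max 0 (previous workload - A n) (the left limit
  W(T-)) and joins iff its patience is at least p.\<close>
fun wk_after :: "real \<Rightarrow> (nat \<Rightarrow> real) \<Rightarrow> (nat \<Rightarrow> real) \<Rightarrow> (nat \<Rightarrow> ereal) \<Rightarrow> nat \<Rightarrow> real" where
  "wk_after x A S Y 0 = x"
| "wk_after x A S Y (Suc n) =
     (let p = max 0 (wk_after x A S Y n - A n)
      in p + (if ereal p \<le> Y n then S n else 0))"

definition arrival_time :: "(nat \<Rightarrow> real) \<Rightarrow> nat \<Rightarrow> real" where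
  "arrival_time A k = (\<Sum>i\<le>k. A i)"

definition num_arrivals :: "(nat \<Rightarrow> real) \<Rightarrow> real \<Rightarrow> nat" where
  "num_arrivals A t = card {k. arrival_time A k \<le> t}"

text \<open>Workload at time t (right-continuous version).\<close>
definition workload :: "real \<Rightarrow> (nat \<Rightarrow> real) \<Rightarrow> (nat \<Rightarrow> real) \<Rightarrow> (nat \<Rightarrow> ereal) \<Rightarrow> real \<Rightarrow> real" where
  "workload x A S Y t =
     (let N = num_arrivals A t
      in max 0 (wk_after x A S Y N - (t - (\<Sum>i<N. A i))))"

end

theory Submission
  imports Defs
begin


lemma downclosed_finite_nat:
  fixes K :: "nat set"
  assumes "finite K" "\<And>j k. k \<in> K \<Longrightarrow> j \<le> k \<Longrightarrow> j \<in> K"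
  shows "K = {..<card K}"
proof -
  have ex: "\<exists>m. m \<notin> K" using assms(1) by (meson ex_new_if_finite infinite_UNIV_nat)
  define m where "m = (LEAST m. m \<notin> K)"
  have mK: "m \<notin> K" unfolding m_def using ex by (metis LeastI)
  have "K = {..<m}"
  proof (intro set_eqI iffI)
    fix k assume "k \<in> K"
    then show "k \<in> {..<m}" using mK assms(2)[of k m] by (cases "m \<le> k") auto
  next
    fix k assume "k \<in> {..<m}"
    then show "k \<in> K" unfolding m_def using not_less_Least by auto
  qed
  then show ?thesis by simp
qed

lemma det_bound:
  fixes x :: real and A S :: "nat \<Rightarrow> real" and Y :: "nat \<Rightarrow> ereal"
  assumes A: "\<And>i. 0 \<le> A i" and S: "\<And>i. 0 \<le> S i" and x: "x > 1"
  shows "ennreal (workload x A S Y 1) \<le> ennreal (x - 1) +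
     (\<Sum>k. if arrival_time A k \<le> 1 \<and> ereal (x - arrival_time A k) \<le> Y k then ennreal (S k) else 0)"
proof -
  define T where "T k = arrival_time A k" for k
  define J where "J k = (if ereal (x - T k) \<le> Y k then S k else 0)" for k
  define K where "K = {k. T k \<le> 1}"
  define f where "f k = (if T k \<le> 1 \<and> ereal (x - T k) \<le> Y k then ennreal (S k) else 0)" for k
  have Tsuc: "T n = (\<Sum>i<Suc n. A i)" for n unfolding T_def arrival_time_def
    using lessThan_Suc_atMost by simp
  have Tmono: "T j \<le> T k" if "j \<le> k" for j k
    unfolding T_def arrival_time_def using that A by (intro sum_mono2) auto
  have Jnn: "0 \<le> J k" for k using S by (simp add: J_def)
  show ?thesis
  proof (cases "finite K")
    case False
    then have "num_arrivals A 1 = 0" unfolding num_arrivals_def K_def T_def by simp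
    then have "workload x A S Y 1 = x - 1" unfolding workload_def using x by simp
    then show ?thesis by simp
  next
    case True
    define N where "N = card K"
    have KN: "K = {..<N}" unfolding N_def
      by (rule downclosed_finite_nat[OF True]) (use Tmono in \<open>force simp: K_def\<close>)
    have TN: "k < N \<Longrightarrow> T k \<le> 1" for k using KN K_def by blast
    have inv: "x - (\<Sum>i<n. A i) \<le> wk_after x A S Y n \<and>
        wk_after x A S Y n \<le> x - (\<Sum>i<n. A i) + (\<Sum>k<n. J k)" if "n \<le> N" for n
      using that
    proof (induction n)
      case 0 then show ?case by simp
    next
      case (Suc n)
      let ?w = "wk_after x A S Y n"
      have IH: "x - (\<Sum>i<n. A i) \<le> ?w" "?w \<le> x - (\<Sum>i<n. A i) + (\<Sum>k<n. J k)"
        using Suc by auto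
      have Tn: "T n \<le> 1" using TN Suc by simp
      have sumS: "(\<Sum>i<Suc n. A i) = (\<Sum>i<n. A i) + A n" by simp
      have pos: "?w - A n \<ge> x - T n" using IH(1) Tsuc[of n] sumS by linarith
      then have p: "max 0 (?w - A n) = ?w - A n" using Tn x by linarith
      show ?case
      proof (cases "ereal (?w - A n) \<le> Y n")
        case True
        then have "ereal (x - T n) \<le> Y n" using pos by (meson True ereal_less_eq(3) order_trans)
        then have "J n = S n" by (simp add: J_def)
        then show ?thesis using True p IH sumS S[of n] by (simp add: Let_def)
      next
        case False
        then show ?thesis using p IH sumS Jnn[of n] S[of n] by (simp add: Let_def)
      qed
    qed
    have NA: "num_arrivals A 1 = N" unfolding num_arrivals_def N_def K_def T_def by simp
    have "workload x A S Y 1 \<le> x - 1 + (\<Sum>k<N. J k)"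
      unfolding workload_def NA Let_def using inv[of N] x sum_nonneg[of "{..<N}" J] Jnn by auto
    then have "ennreal (workload x A S Y 1) \<le> ennreal (x - 1 + (\<Sum>k<N. J k))"
      by (rule ennreal_leI)
    also have "\<dots> = ennreal (x - 1) + (\<Sum>k<N. ennreal (J k))"
      using x Jnn by (simp add: sum_nonneg)
    also have "(\<Sum>k<N. ennreal (J k)) = (\<Sum>k<N. f k)"
      using TN by (intro sum.cong) (auto simp: J_def f_def)
    also have "\<dots> \<le> (\<Sum>k. f k)" by (intro sum_le_suminf) auto
    finally show ?thesis unfolding f_def T_def by (simp add: add_left_mono)
  qed
qed


lemma prod3_integral:
  fixes P :: "'c measure" and E :: "real measure" and GH :: "'b measure"
    and f :: "'c \<times> real \<Rightarrow> ennreal" and g :: "'b \<Rightarrow> ennreal"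
  assumes P: "prob_space P" and E: "prob_space E" and GH: "prob_space GH"
    and f: "f \<in> borel_measurable (P \<Otimes>\<^sub>M E)" and g: "g \<in> borel_measurable GH"
  shows "(\<integral>\<^sup>+ p. f (fst p, fst (snd p)) * g (snd (snd p)) \<partial>(P \<Otimes>\<^sub>M (E \<Otimes>\<^sub>M GH)))
       = (\<integral>\<^sup>+ t. \<integral>\<^sup>+ a. f (t, a) \<partial>E \<partial>P) * (\<integral>\<^sup>+ z. g z \<partial>GH)"
proof -
  interpret P: prob_space P by fact
  interpret E: prob_space E by fact
  interpret GH: prob_space GH by fact
  interpret EGH: pair_prob_space E GH ..
  interpret PE: pair_prob_space P E ..
  have sf: "sigma_finite_measure (E \<Otimes>\<^sub>M GH)"
    by (rule prob_space_imp_sigma_finite) (rule EGH.prob_space_axioms)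
  have fm: "(\<lambda>a. f (t, a)) \<in> borel_measurable E" if "t \<in> space P" for t
    using f that by measurable
  have "(\<integral>\<^sup>+ p. f (fst p, fst (snd p)) * g (snd (snd p)) \<partial>(P \<Otimes>\<^sub>M (E \<Otimes>\<^sub>M GH)))
      = (\<integral>\<^sup>+ t. \<integral>\<^sup>+ q. f (t, fst q) * g (snd q) \<partial>(E \<Otimes>\<^sub>M GH) \<partial>P)"
    using f g by (subst sigma_finite_measure.nn_integral_fst[OF sf, symmetric]) (auto intro!: nn_integral_cong)
  also have "\<dots> = (\<integral>\<^sup>+ t. \<integral>\<^sup>+ a. \<integral>\<^sup>+ z. f (t, a) * g z \<partial>GH \<partial>E \<partial>P)"
  proof (intro nn_integral_cong)
    fix t assume t: "t \<in> space P"
    show "(\<integral>\<^sup>+ q. f (t, fst q) * g (snd q) \<partial>(E \<Otimes>\<^sub>M GH)) = (\<integral>\<^sup>+ a. \<integral>\<^sup>+ z. f (t, a) * g z \<partial>GH \<partial>E)"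
      using fm[OF t] g by (subst GH.nn_integral_fst[symmetric]) auto
  qed
  also have "\<dots> = (\<integral>\<^sup>+ t. (\<integral>\<^sup>+ a. f (t, a) \<partial>E) * (\<integral>\<^sup>+ z. g z \<partial>GH) \<partial>P)"
    using g fm by (auto intro!: nn_integral_cong simp: nn_integral_cmult nn_integral_multc)
  also have "\<dots> = (\<integral>\<^sup>+ t. \<integral>\<^sup>+ a. f (t, a) \<partial>E \<partial>P) * (\<integral>\<^sup>+ z. g z \<partial>GH)"
    using f by (intro nn_integral_multc) (rule E.borel_measurable_nn_integral_fst)
  finally show ?thesis .
qed

lemma erlang_CDF_sum:
  fixes l :: real assumes l: "0 < l"
  shows "(\<Sum>k. ennreal (erlang_CDF k l 1)) = ennreal l"
proof -
  have "(\<Sum>k. ennreal (erlang_CDF k l 1))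
      = (\<Sum>k. \<integral>\<^sup>+ t. ennreal (erlang_density k l t) * indicator {..1} t \<partial>lborel)"
    using nn_integral_erlang_density[OF l] by simp
  also have "\<dots> = (\<integral>\<^sup>+ t. (\<Sum>k. ennreal (erlang_density k l t) * indicator {..1} t) \<partial>lborel)"
    by (rule nn_integral_suminf[symmetric]) auto
  also have "\<dots> = (\<integral>\<^sup>+ t. ennreal l * indicator {0..1::real} t \<partial>lborel)"
  proof (rule nn_integral_cong)
    fix t :: real
    show "(\<Sum>k. ennreal (erlang_density k l t) * indicator {..1} t) = ennreal l * indicator {0..1} t"
    proof (cases "0 \<le> t")
      case True
      have "(\<lambda>k. l * exp (- l * t) * ((l * t) ^ k /\<^sub>R fact k)) sums (l * exp (- l * t) * exp (l * t))"
        by (intro sums_mult exp_converges)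
      then have s: "(\<lambda>k. erlang_density k l t) sums l"
        using True by (simp add: erlang_density_def exp_minus field_simps power_mult_distrib)
      have "(\<Sum>k. ennreal (erlang_density k l t)) = ennreal l"
        using s l by (intro suminf_ennreal_eq) auto
      then show ?thesis using True
        by (cases "t \<le> 1") (auto simp: indicator_def)
    next
      case False
      then show ?thesis by (simp add: erlang_density_def indicator_def)
    qed
  qed
  also have "\<dots> = ennreal l" using l by (simp add: nn_integral_cmult_indicator)
  finally show ?thesis .
qed


theorem lemma5:
  fixes M :: "'a measure"
    and A S :: "nat \<Rightarrow> 'a \<Rightarrow> real"
    and Y :: "nat \<Rightarrow> 'a \<Rightarrow> ereal"
    and Gm :: "real measure" and Hm :: "ereal measure"
    and lam x :: real
  assumes "prob_space M"
    and "lam > 0"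
    and "prob_space Gm" and "sets Gm = sets borel"
    and "AE s in Gm. 0 \<le> s"
    and "prob_space Hm" and "sets Hm = sets borel"
    and "AE y in Hm. 0 < y"
    and "\<And>n. A n \<in> borel_measurable M"
    and "\<And>n. S n \<in> borel_measurable M"
    and "\<And>n. Y n \<in> borel_measurable M"
    and "prob_space.indep_vars M (\<lambda>_. borel \<Otimes>\<^sub>M (borel \<Otimes>\<^sub>M borel))
           (\<lambda>n \<omega>. (A n \<omega>, S n \<omega>, Y n \<omega>)) UNIV"
    and "\<And>n. distr M (borel \<Otimes>\<^sub>M (borel \<Otimes>\<^sub>M borel)) (\<lambda>\<omega>. (A n \<omega>, S n \<omega>, Y n \<omega>))
           = density lborel (exponential_density lam) \<Otimes>\<^sub>M (Gm \<Otimes>\<^sub>M Hm)"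
    and "integrable Gm (\<lambda>s. s)"
    and "x > 1"
  shows "(\<integral>\<omega>. workload x (\<lambda>n. A n \<omega>) (\<lambda>n. S n \<omega>) (\<lambda>n. Y n \<omega>) 1 \<partial>M) - x + 1
           \<le> lam * (\<integral>s. s \<partial>Gm) * (1 - measure Hm {..ereal (x - 1)})"
proof -
  note Am[measurable] = assms(9) and Sm[measurable] = assms(10) and Ym[measurable] = assms(11)
  note lam = assms(2) and x = assms(15)
  interpret prob_space M by fact
  interpret G: prob_space Gm by fact
  interpret H: prob_space Hm by fact
  interpret GH: pair_prob_space Gm Hm ..
  define E where "E = density lborel (exponential_density lam)"
  have Ep: "prob_space E" unfolding E_def using lam by (rule prob_space_exponential_density)
  interpret E: prob_space E by (rule Ep)
  have sE[measurable_cong, simp]: "sets E = sets borel" unfolding E_def by simp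
  have GHp: "prob_space (Gm \<Otimes>\<^sub>M Hm)" by (rule GH.prob_space_axioms)
  interpret EGH: pair_prob_space E "Gm \<Otimes>\<^sub>M Hm" by (intro pair_prob_space.intro pair_sigma_finite.intro) (unfold_locales)
  have sG[measurable_cong]: "sets Gm = sets borel" and sH[measurable_cong]: "sets Hm = sets borel"
    using assms(4,7) by auto
  define B3 where "B3 = (borel \<Otimes>\<^sub>M (borel \<Otimes>\<^sub>M borel) :: (real \<times> real \<times> ereal) measure)"
  define X where "X n \<omega> = (A n \<omega>, S n \<omega>, Y n \<omega>)" for n \<omega>
  have Xm[measurable]: "X n \<in> measurable M B3" for n unfolding X_def B3_def by measurable
  have distrX: "distr M B3 (X n) = E \<Otimes>\<^sub>M (Gm \<Otimes>\<^sub>M Hm)" for n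
    using assms(13)[of n] unfolding X_def B3_def E_def .
  have indX: "indep_vars (\<lambda>_. B3) X UNIV"
    using assms(12) unfolding X_def B3_def .

  have fstE: "distr (E \<Otimes>\<^sub>M (Gm \<Otimes>\<^sub>M Hm)) lborel fst = E"
  proof -
    have "distr (E \<Otimes>\<^sub>M (Gm \<Otimes>\<^sub>M Hm)) lborel fst = distr (E \<Otimes>\<^sub>M (Gm \<Otimes>\<^sub>M Hm)) E fst"
      by (rule distr_cong) auto
    also have "\<dots> = E" by (rule prob_space.distr_pair_fst[OF GHp])
    finally show ?thesis .
  qed
  have distrA: "distr M lborel (A n) = E" for n
  proof -
    have "distr M lborel (A n) = distr (distr M B3 (X n)) lborel fst"
      by (subst distr_distr[OF _ Xm]) (auto simp: comp_def X_def B3_def)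
    then show ?thesis using distrX fstE by simp
  qed
  have distribA: "distributed M lborel (A n) (exponential_density lam)" for n
    unfolding distributed_def using distrA[of n] by (simp add: E_def)
  have indA: "indep_vars (\<lambda>_. borel) A UNIV"
  proof -
    have "indep_vars (\<lambda>_. borel) (\<lambda>i \<omega>. fst (X i \<omega>)) UNIV"
      by (rule indep_vars_compose2[OF indX]) (simp add: B3_def)
    then show ?thesis by (simp add: X_def)
  qed
  define T where "T k \<omega> = (\<Sum>i\<le>k. A i \<omega>)" for k \<omega>
  have Tm[measurable]: "T k \<in> borel_measurable M" for k unfolding T_def by measurable
  have erlT: "distributed M lborel (T k) (erlang_density k lam)" for k
  proof -
    have "distributed M lborel (\<lambda>\<omega>. \<Sum>i\<in>{..k}. A i \<omega>) (erlang_density (card {..k} - 1) lam)"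
      by (rule exponential_distributed_sum[OF _ _ lam distribA]) (auto intro: indep_vars_subset[OF indA])
    moreover have "T k = (\<lambda>\<omega>. \<Sum>i\<in>{..k}. A i \<omega>)" by (simp add: fun_eq_iff T_def)
    ultimately show ?thesis by simp
  qed
  have PT: "\<P>(\<omega> in M. T k \<omega> \<le> 1) = erlang_CDF k lam 1" for k
    by (rule erlang_distributed_le[OF erlT lam]) simp
  have AE_T1: "AE \<omega> in M. T k \<omega> \<noteq> 1" for k
  proof -
    have "AE t in density lborel (erlang_density k lam). t \<noteq> 1"
      by (subst AE_density) (auto intro: eventually_mono[OF AE_lborel_singleton[of 1]])
    moreover have "distr M lborel (T k) = density lborel (erlang_density k lam)"
      using erlT[of k] by (simp add: distributed_def)
    ultimately have "AE t in distr M lborel (T k). t \<noteq> 1"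
      by metis
    then show ?thesis by (rule AE_distrD[rotated]) simp
  qed
  have AE_nonneg: "AE \<omega> in M. \<forall>i. 0 \<le> A i \<omega> \<and> 0 \<le> S i \<omega>"
  proof (rule AE_all_countable[THEN iffD2], rule allI)
    fix i
    have "AE a in E. AE z in Gm \<Otimes>\<^sub>M Hm. 0 \<le> a \<and> 0 \<le> fst z"
    proof -
      have a0: "AE a in E. 0 \<le> a" unfolding E_def
        by (subst AE_density) (auto simp: exponential_density_def)
      have z0: "AE z in Gm \<Otimes>\<^sub>M Hm. 0 \<le> fst z"
      proof -
        have "AE s in Gm. AE y in Hm. 0 \<le> s" using assms(5) by simp
        then show ?thesis by (subst GH.AE_pair_iff[symmetric]) auto
      qed
      show ?thesis
      proof (rule eventually_mono[OF a0])
        fix a :: real assume "0 \<le> a"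
        then show "AE z in Gm \<Otimes>\<^sub>M Hm. 0 \<le> a \<and> 0 \<le> fst z"
          using z0 by (auto elim: eventually_mono)
      qed
    qed
    moreover have ms: "{p \<in> space (E \<Otimes>\<^sub>M (Gm \<Otimes>\<^sub>M Hm)). 0 \<le> fst p \<and> 0 \<le> fst (snd p)} \<in> sets (E \<Otimes>\<^sub>M (Gm \<Otimes>\<^sub>M Hm))"
      by measurable
    ultimately have "AE p in E \<Otimes>\<^sub>M (Gm \<Otimes>\<^sub>M Hm). 0 \<le> fst p \<and> 0 \<le> fst (snd p)"
      using EGH.AE_pair_iff[of "\<lambda>a z. 0 \<le> a \<and> 0 \<le> fst z"] by simp
    then have "AE p in distr M B3 (X i). 0 \<le> fst p \<and> 0 \<le> fst (snd p)"
      by (subst distrX)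
    then have "AE \<omega> in M. 0 \<le> fst (X i \<omega>) \<and> 0 \<le> fst (snd (X i \<omega>))"
      by (rule AE_distrD[OF Xm])
    then show "AE \<omega> in M. 0 \<le> A i \<omega> \<and> 0 \<le> S i \<omega>"
      by (simp add: X_def)
  qed

  define T' where "T' k \<omega> = (\<Sum>i<k. A i \<omega>)" for k \<omega>
  have T'm[measurable]: "T' k \<in> borel_measurable M" for k unfolding T'_def by measurable
  have TT': "T k \<omega> = T' k \<omega> + A k \<omega>" for k \<omega>
    unfolding T_def T'_def by (simp add: lessThan_Suc_atMost[symmetric])
  define T3 where "T3 k \<omega> = (T' k \<omega>, 0::real, 0::ereal)" for k \<omega>
  have T3m[measurable]: "T3 k \<in> measurable M B3" for k unfolding T3_def B3_def by measurable
  have indTX: "indep_var B3 (T3 k) B3 (X k)" for k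
  proof -
    have "indep_var B3 ((\<lambda>f. (\<Sum>i<k. fst (f i), 0::real, 0::ereal)) \<circ> (\<lambda>\<omega>. restrict (\<lambda>i. X i \<omega>) {..<k}))
                    B3 ((\<lambda>f. f k) \<circ> (\<lambda>\<omega>. restrict (\<lambda>i. X i \<omega>) {k}))"
      by (rule indep_var_compose[OF indep_var_restrict[OF indX]]) (auto simp: B3_def)
    moreover have "((\<lambda>f. (\<Sum>i<k. fst (f i), 0::real, 0::ereal)) \<circ> (\<lambda>\<omega>. restrict (\<lambda>i. X i \<omega>) {..<k})) = T3 k"
      by (auto simp: fun_eq_iff T'_def T3_def X_def intro!: sum.cong)
    moreover have "((\<lambda>f. f k) \<circ> (\<lambda>\<omega>. restrict (\<lambda>i. X i \<omega>) {k})) = X k"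
      by (auto simp: fun_eq_iff)
    ultimately show ?thesis by simp
  qed
  have jointD: "distr M (B3 \<Otimes>\<^sub>M B3) (\<lambda>\<omega>. (T3 k \<omega>, X k \<omega>)) = distr M B3 (T3 k) \<Otimes>\<^sub>M (E \<Otimes>\<^sub>M (Gm \<Otimes>\<^sub>M Hm))" for k
    using indTX[of k] distrX[of k] by (simp add: indep_var_distribution_eq)
  have key: "(\<integral>\<^sup>+\<omega>. f (T' k \<omega>, A k \<omega>) * g (S k \<omega>, Y k \<omega>) \<partial>M)
     = (\<integral>\<^sup>+\<omega>. \<integral>\<^sup>+a. f (T' k \<omega>, a) \<partial>E \<partial>M) * (\<integral>\<^sup>+z. g z \<partial>(Gm \<Otimes>\<^sub>M Hm))"
    if fm: "f \<in> borel_measurable (borel \<Otimes>\<^sub>M borel)" and gm: "g \<in> borel_measurable (borel \<Otimes>\<^sub>M borel)"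
    for k and f :: "real \<times> real \<Rightarrow> ennreal" and g :: "real \<times> ereal \<Rightarrow> ennreal"
  proof -
    have fm'[measurable]: "f \<in> borel_measurable (borel \<Otimes>\<^sub>M borel)" by fact
    have gm'[measurable]: "g \<in> borel_measurable (borel \<Otimes>\<^sub>M borel)" by fact
    have "(\<integral>\<^sup>+\<omega>. f (T' k \<omega>, A k \<omega>) * g (S k \<omega>, Y k \<omega>) \<partial>M)
        = (\<integral>\<^sup>+p. f (fst (fst p), fst (snd p)) * g (snd (snd p)) \<partial>distr M (B3 \<Otimes>\<^sub>M B3) (\<lambda>\<omega>. (T3 k \<omega>, X k \<omega>)))"
      by (subst nn_integral_distr) (auto simp: X_def B3_def T3_def)
    also have "\<dots> = (\<integral>\<^sup>+p. f (fst (fst p), fst (snd p)) * g (snd (snd p)) \<partial>(distr M B3 (T3 k) \<Otimes>\<^sub>M (E \<Otimes>\<^sub>M (Gm \<Otimes>\<^sub>M Hm))))"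
      by (simp add: jointD)
    also have "\<dots> = (\<integral>\<^sup>+q. \<integral>\<^sup>+a. f (fst q, a) \<partial>E \<partial>distr M B3 (T3 k)) * (\<integral>\<^sup>+z. g z \<partial>(Gm \<Otimes>\<^sub>M Hm))"
    proof (rule prod3_integral[where f="\<lambda>(q, a). f (fst q, a)", simplified])
      show "prob_space (distr M B3 (T3 k))" by (rule prob_space_distr) simp
      show "(\<lambda>(q, a). f (fst q, a)) \<in> borel_measurable (distr M B3 (T3 k) \<Otimes>\<^sub>M E)"
        unfolding B3_def by measurable
      show "g \<in> borel_measurable (Gm \<Otimes>\<^sub>M Hm)" by measurable
    qed (fact Ep GHp)+
    also have "(\<integral>\<^sup>+q. \<integral>\<^sup>+a. f (fst q, a) \<partial>E \<partial>distr M B3 (T3 k)) = (\<integral>\<^sup>+\<omega>. \<integral>\<^sup>+a. f (T' k \<omega>, a) \<partial>E \<partial>M)"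
    proof -
      have "(\<lambda>(q, a). f (fst q, a)) \<in> borel_measurable (B3 \<Otimes>\<^sub>M E)" unfolding B3_def by measurable
      from E.borel_measurable_nn_integral_fst[OF this]
      have mq: "(\<lambda>q. \<integral>\<^sup>+a. f (fst q, a) \<partial>E) \<in> borel_measurable B3" by simp
      then have mq': "(\<lambda>q. \<integral>\<^sup>+a. f (fst q, a) \<partial>E) \<in> borel_measurable (distr M B3 (T3 k))" by simp
      show ?thesis by (simp add: nn_integral_distr[OF T3m mq'] T3_def)
    qed
    finally show ?thesis .
  qed
  define W where "W \<omega> = workload x (\<lambda>n. A n \<omega>) (\<lambda>n. S n \<omega>) (\<lambda>n. Y n \<omega>) 1" for \<omega>
  define F where "F k \<omega> = (if T k \<omega> \<le> 1 \<and> ereal (x - T k \<omega>) \<le> Y k \<omega> then ennreal (S k \<omega>) else 0)" for k \<omega>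
  have Fm[measurable]: "F k \<in> borel_measurable M" for k unfolding F_def by measurable
  have Tarr: "arrival_time (\<lambda>n. A n \<omega>) k = T k \<omega>" for k \<omega> by (simp add: arrival_time_def T_def)
  have bound: "AE \<omega> in M. ennreal (W \<omega>) \<le> ennreal (x - 1) + (\<Sum>k. F k \<omega>)"
    using AE_nonneg
  proof (rule eventually_mono)
    fix \<omega> assume "\<forall>i. 0 \<le> A i \<omega> \<and> 0 \<le> S i \<omega>"
    then show "ennreal (W \<omega>) \<le> ennreal (x - 1) + (\<Sum>k. F k \<omega>)"
      using det_bound[of "\<lambda>n. A n \<omega>" "\<lambda>n. S n \<omega>" x "\<lambda>n. Y n \<omega>"] x
      unfolding W_def F_def Tarr by auto
  qed
  define f1 :: "real \<times> real \<Rightarrow> ennreal" where "f1 p = (if fst p + snd p \<le> 1 then 1 else 0)" for p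
  define g1 :: "real \<times> ereal \<Rightarrow> ennreal" where "g1 p = (if ereal (x - 1) < snd p then ennreal (fst p) else 0)" for p
  have f1m[measurable]: "f1 \<in> borel_measurable (borel \<Otimes>\<^sub>M borel)" unfolding f1_def by measurable
  have g1m[measurable]: "g1 \<in> borel_measurable (borel \<Otimes>\<^sub>M borel)" unfolding g1_def by measurable
  define C where "C = (\<integral>\<^sup>+z. g1 z \<partial>(Gm \<Otimes>\<^sub>M Hm))"
  have Fle: "F k \<omega> \<le> f1 (T' k \<omega>, A k \<omega>) * g1 (S k \<omega>, Y k \<omega>) + (if T k \<omega> = 1 then ennreal (S k \<omega>) else 0)" for k \<omega>
  proof (cases "T k \<omega> \<le> 1 \<and> ereal (x - T k \<omega>) \<le> Y k \<omega>")
    case True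
    show ?thesis
    proof (cases "T k \<omega> = 1")
      case False
      with True have "T k \<omega> < 1" by simp
      then have "ereal (x - 1) < ereal (x - T k \<omega>)" by simp
      with True have "ereal (x - 1) < Y k \<omega>" by (meson less_le_trans)
      then show ?thesis using True TT'[of k \<omega>] by (simp add: F_def f1_def g1_def)
    qed (auto simp add: F_def)
  qed (auto simp add: F_def)
  have I1: "(\<integral>\<^sup>+\<omega>. f1 (T' k \<omega>, A k \<omega>) * g1 (S k \<omega>, Y k \<omega>) \<partial>M) = ennreal (erlang_CDF k lam 1) * C" for k
  proof -
    have "(\<integral>\<^sup>+\<omega>. f1 (T' k \<omega>, A k \<omega>) * (\<lambda>_. 1) (S k \<omega>, Y k \<omega>) \<partial>M)
        = (\<integral>\<^sup>+\<omega>. \<integral>\<^sup>+a. f1 (T' k \<omega>, a) \<partial>E \<partial>M) * (\<integral>\<^sup>+z. (\<lambda>_. 1) z \<partial>(Gm \<Otimes>\<^sub>M Hm))"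
      by (rule key) auto
    also have "(\<integral>\<^sup>+z. (\<lambda>_. 1) z \<partial>(Gm \<Otimes>\<^sub>M Hm)) = 1"
      using GH.emeasure_space_1 by simp
    also have "(\<integral>\<^sup>+\<omega>. f1 (T' k \<omega>, A k \<omega>) * (\<lambda>_. 1) (S k \<omega>, Y k \<omega>) \<partial>M)
        = (\<integral>\<^sup>+\<omega>. indicator {\<omega> \<in> space M. T k \<omega> \<le> 1} \<omega> \<partial>M)"
      by (intro nn_integral_cong) (simp add: f1_def TT' indicator_def)
    also have "\<dots> = ennreal (erlang_CDF k lam 1)"
      using PT[of k] by (simp add: emeasure_eq_measure)
    finally have "(\<integral>\<^sup>+\<omega>. \<integral>\<^sup>+a. f1 (T' k \<omega>, a) \<partial>E \<partial>M) = ennreal (erlang_CDF k lam 1)" by simp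
    moreover have "(\<integral>\<^sup>+\<omega>. f1 (T' k \<omega>, A k \<omega>) * g1 (S k \<omega>, Y k \<omega>) \<partial>M)
        = (\<integral>\<^sup>+\<omega>. \<integral>\<^sup>+a. f1 (T' k \<omega>, a) \<partial>E \<partial>M) * C"
      unfolding C_def by (rule key) auto
    ultimately show ?thesis by simp
  qed
  have I2: "(\<integral>\<^sup>+\<omega>. (if T k \<omega> = 1 then ennreal (S k \<omega>) else 0) \<partial>M) = 0" for k
    by (rule nn_integral_zero') (rule eventually_mono[OF AE_T1[of k]], simp)
  have IF: "(\<integral>\<^sup>+\<omega>. F k \<omega> \<partial>M) \<le> ennreal (erlang_CDF k lam 1) * C" for k
  proof -
    have "(\<integral>\<^sup>+\<omega>. F k \<omega> \<partial>M) \<le> (\<integral>\<^sup>+\<omega>. f1 (T' k \<omega>, A k \<omega>) * g1 (S k \<omega>, Y k \<omega>) + (if T k \<omega> = 1 then ennreal (S k \<omega>) else 0) \<partial>M)"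
      by (intro nn_integral_mono Fle)
    also have "\<dots> = (\<integral>\<^sup>+\<omega>. f1 (T' k \<omega>, A k \<omega>) * g1 (S k \<omega>, Y k \<omega>) \<partial>M) + (\<integral>\<^sup>+\<omega>. (if T k \<omega> = 1 then ennreal (S k \<omega>) else 0) \<partial>M)"
      by (rule nn_integral_add) auto
    finally show ?thesis using I1 I2 by simp
  qed
  have intW: "(\<integral>\<^sup>+\<omega>. ennreal (W \<omega>) \<partial>M) \<le> ennreal (x - 1) + ennreal lam * C"
  proof -
    have "(\<integral>\<^sup>+\<omega>. ennreal (W \<omega>) \<partial>M) \<le> (\<integral>\<^sup>+\<omega>. ennreal (x - 1) + (\<Sum>k. F k \<omega>) \<partial>M)"
      by (rule nn_integral_mono_AE[OF bound])
    also have "\<dots> = ennreal (x - 1) + (\<Sum>k. \<integral>\<^sup>+\<omega>. F k \<omega> \<partial>M)"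
      by (subst nn_integral_add) (auto simp: nn_integral_suminf emeasure_space_1)
    also have "\<dots> \<le> ennreal (x - 1) + (\<Sum>k. ennreal (erlang_CDF k lam 1) * C)"
      by (intro add_left_mono suminf_le IF) auto
    also have "\<dots> = ennreal (x - 1) + ennreal lam * C"
      using erlang_CDF_sum[OF lam] by simp
    finally show ?thesis .
  qed
  define c0 where "c0 = (\<integral>s. s \<partial>Gm) * (1 - measure Hm {..ereal (x - 1)})"
  have spH: "space Hm = UNIV" using sets_eq_imp_space_eq[OF sH] by simp
  have C_eq: "C = ennreal c0"
  proof -
    have g1GH: "g1 \<in> borel_measurable (Gm \<Otimes>\<^sub>M Hm)" by measurable
    have "C = (\<integral>\<^sup>+s. \<integral>\<^sup>+y. g1 (s, y) \<partial>Hm \<partial>Gm)"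
      unfolding C_def by (rule H.nn_integral_fst[OF g1GH, symmetric])
    also have "\<dots> = (\<integral>\<^sup>+s. ennreal s * emeasure Hm {ereal (x - 1)<..} \<partial>Gm)"
    proof (rule nn_integral_cong)
      fix s :: real
      have "(\<integral>\<^sup>+y. g1 (s, y) \<partial>Hm) = (\<integral>\<^sup>+y. ennreal s * indicator {ereal (x - 1)<..} y \<partial>Hm)"
        by (intro nn_integral_cong) (simp add: g1_def indicator_def)
      also have "\<dots> = ennreal s * emeasure Hm {ereal (x - 1)<..}"
        by (rule nn_integral_cmult_indicator) (simp add: sH)
      finally show "(\<integral>\<^sup>+y. g1 (s, y) \<partial>Hm) = ennreal s * emeasure Hm {ereal (x - 1)<..}" .
    qed
    also have "\<dots> = (\<integral>\<^sup>+s. ennreal s \<partial>Gm) * emeasure Hm {ereal (x - 1)<..}"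
      by (rule nn_integral_multc) (simp add: measurable_cong_sets[OF sG refl])
    also have "(\<integral>\<^sup>+s. ennreal s \<partial>Gm) = ennreal (\<integral>s. s \<partial>Gm)"
      by (rule nn_integral_eq_integral[OF assms(14) assms(5)])
    also have "emeasure Hm {ereal (x - 1)<..} = ennreal (1 - measure Hm {..ereal (x - 1)})"
    proof -
      have "{ereal (x - 1)<..} = space Hm - {..ereal (x - 1)}" using spH by auto
      then show ?thesis using H.prob_compl[of "{..ereal (x - 1)}"]
        by (simp add: H.emeasure_eq_measure sH)
    qed
    also have "ennreal (\<integral>s. s \<partial>Gm) * ennreal (1 - measure Hm {..ereal (x - 1)}) = ennreal c0"
      unfolding c0_def by (simp add: ennreal_mult integral_nonneg_AE[OF assms(5)])
    finally show ?thesis .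
  qed
  have c0nn: "0 \<le> c0" unfolding c0_def
    by (intro mult_nonneg_nonneg integral_nonneg_AE[OF assms(5)]) (simp add: H.prob_le_1)
  have intW': "(\<integral>\<^sup>+\<omega>. ennreal (W \<omega>) \<partial>M) \<le> ennreal (x - 1 + lam * c0)"
    using intW C_eq x lam c0nn by (simp add: ennreal_mult ennreal_plus)
  have main: "(\<integral>\<omega>. W \<omega> \<partial>M) \<le> x - 1 + lam * c0"
  proof (cases "integrable M W")
    case True
    have Wnn: "0 \<le> W \<omega>" for \<omega> by (simp add: W_def workload_def Let_def)
    have "(\<integral>\<omega>. W \<omega> \<partial>M) = enn2real (\<integral>\<^sup>+\<omega>. ennreal (W \<omega>) \<partial>M)"
      using True Wnn by (intro integral_eq_nn_integral) auto
    also have "\<dots> \<le> enn2real (ennreal (x - 1 + lam * c0))"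
      by (rule enn2real_mono[OF intW']) simp
    also have "\<dots> = x - 1 + lam * c0" using x lam c0nn by (simp del: ennreal_plus)
    finally show ?thesis .
  next
    case False
    then have "(\<integral>\<omega>. W \<omega> \<partial>M) = 0" by (rule not_integrable_integral_eq)
    then show ?thesis using x lam c0nn by simp
  qed
  show ?thesis using main unfolding W_def c0_def by (simp add: mult.assoc)
qed
end
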